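(* For a positive integer $k$, define $f_k$ on the two-dimensional probability simplex by $f_k(x_1,x_2)=1-(2x_1-1)^{2k}$ (equivalently $1-(x_1-x_2)^{2k}$). Then $f_k\in\mathfrak{F}_{sc}$. Moreover, let $\rho=\frac12(I+\vec n\cdot\vec\sigma)$ be a qubit state with Bloch vector $\vec n=n(\sin\theta\cos\phi,\sin\theta\sin\phi,\cos\theta)$ with $0<n<1$, $0<\theta\le\pi/2$, and let $\mathfrak{D}^{(m_1)}$ and $\mathfrak{D}^{(m_2)}$ be the following pure state decompositions of $\rho$: with $\theta_3=\arccos\sqrt{1-n^2\sin^2\theta}$, $\mathfrak{D}^{(m_1)}$ consists of $\cos\frac{\theta_3}{2}|0\rangle+e^{i\phi}\sin\frac{\theta_3}{2}|1\rangle$ and $\sin\frac{\theta_3}{2}|0\rangle+e^{i\phi}\cos\frac{\theta_3}{2}|1\rangle$ with probabilities $\frac12\big(1\pm\frac{n\cos\theta}{\cos\theta_3}\big)$; with $\theta_4=\arccos\frac{1+2n\cos\theta+n^2\cos2\theta}{1+n^2+2n\cos\theta}$, $\mathfrak{D}^{(m_2)}$ consists of $|1\rangle$ with probability $\frac{1-n^2}{2(1+n\cos\theta)}$ and $\cos\frac{\theta_4}{2}|0\rangle+e^{i\phi}\sin\frac{\theta_4}{2}|1\rangle$ with probability $\frac{1+n^2+2n\cos\theta}{2(1+n\cos\theta)}$. Then there exists $K$ such that for all $k\ge K$, $\bar C_{f_k}(\mathfrak{D}^{(m_1)})>\bar C_{f_k}(\mathfrak{D}^{(m_2)})$. In particular,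 there is no single pure state decomposition of such a $\rho$ that minimizes the average coherence $\bar C_f$ simultaneously for all $f\in\mathfrak{F}_{sc}$ among the decompositions $\mathfrak{D}^{(m_1)},\mathfrak{D}^{(m_2)}$ (i.e. $\mathfrak{D}^{(m_1)}$ is not minimal for every $f$).
   Context: Reference basis $\{|0\rangle,|1\rangle\}$ of $\mathbb{C}^2$; $\vec\sigma$ are the Pauli matrices. Let $\Omega$ be the probability simplex in $\mathbb{R}^2$. $\mathfrak{F}_{sc}$ denotes the set of functions $f:\Omega\to\mathbb{R}$ such that (i) $f((1,0))=0$; (ii) $f(x_1,x_2)=f(x_2,x_1)$; (iii) $f$ is concave. For a unit vector $|\psi\rangle=\psi_0|0\rangle+\psi_1|1\rangle$, $C_f(|\psi\rangle)=f(|\psi_0|^2,|\psi_1|^2)$. A pure state decomposition of $\rho$ is a finite family $\{p_k,|\psi_k\rangle\}$ with $p_k\ge0$, $\sum_kp_k=1$, unit vectors $|\psi_k\rangle$ and $\rho=\sum_kp_k|\psi_k\rangle\langle\psi_k|$; its average coherence is $\bar C_f(\mathfrak{D})=\sum_kp_kC_f(|\psi_k\rangle)$. *)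

theory Defs
  imports "HOL-Analysis.Analysis"
begin

(* Qubit conventions: a ket is a vector in complex^2, component 1 = amplitude of |0>,
   component 2 = amplitude of |1>.  Operators are complex^2^2 (rows/columns indexed 1,2). *)

type_synonym ket = "complex ^ 2"
type_synonym op2 = "complex ^ 2 ^ 2"

definition ket2 :: "complex \<Rightarrow> complex \<Rightarrow> ket" where
  "ket2 a b = (\<chi> i. if i = 1 then a else b)"

definition mat2 :: "complex \<Rightarrow> complex \<Rightarrow> complex \<Rightarrow> complex \<Rightarrow> op2" where
  "mat2 a b c d = (\<chi> i j. if i = 1 then (if j = 1 then a else b) else (if j = 1 then c else d))"

definition id2 :: op2 where "id2 = mat2 1 0 0 1"
definition sigma_x :: op2 where "sigma_x = mat2 0 1 1 0"
definition sigma_y :: op2 where "sigma_y = mat2 0 (- \<i>) \<i> 0"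
definition sigma_z :: op2 where "sigma_z = mat2 1 0 0 (-1)"

definition bloch_state :: "real \<Rightarrow> real \<Rightarrow> real \<Rightarrow> op2" where
  "bloch_state nx ny nz =
     (\<chi> i j. (1/2) * (id2 $ i $ j + of_real nx * sigma_x $ i $ j
                         + of_real ny * sigma_y $ i $ j + of_real nz * sigma_z $ i $ j))"

definition outer :: "ket \<Rightarrow> op2" where
  "outer \<psi> = (\<chi> i j. \<psi> $ i * cnj (\<psi> $ j))"

definition simplex2 :: "(real \<times> real) set" where
  "simplex2 = {(x1, x2). x1 \<ge> 0 \<and> x2 \<ge> 0 \<and> x1 + x2 = 1}"

definition F_sc :: "(real \<times> real \<Rightarrow> real) set" where
  "F_sc = {f. f (1, 0) = 0 \<and> (\<forall>x1 x2. (x1, x2) \<in> simplex2 \<longrightarrow> f (x1, x2) = f (x2, x1))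
              \<and> concave_on simplex2 f}"

definition coh :: "(real \<times> real \<Rightarrow> real) \<Rightarrow> ket \<Rightarrow> real" where
  "coh f \<psi> = f ((cmod (\<psi> $ 1))\<^sup>2, (cmod (\<psi> $ 2))\<^sup>2)"

definition pure_decomp :: "op2 \<Rightarrow> (real \<times> ket) list \<Rightarrow> bool" where
  "pure_decomp \<rho> D \<longleftrightarrow>
     (\<forall>(p, \<psi>) \<in> set D. p \<ge> 0 \<and> norm \<psi> = 1) \<and>
     sum_list (map fst D) = 1 \<and>
     \<rho> = sum_list (map (\<lambda>(p, \<psi>). p *\<^sub>R outer \<psi>) D)"

definition avg_coh :: "(real \<times> real \<Rightarrow> real) \<Rightarrow> (real \<times> ket) list \<Rightarrow> real" where
  "avg_coh f D = sum_list (map (\<lambda>(p, \<psi>). p * coh f \<psi>) D)"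

definition f_pow :: "nat \<Rightarrow> real \<times> real \<Rightarrow> real" where
  "f_pow k = (\<lambda>(x1, x2). 1 - (2 * x1 - 1) ^ (2 * k))"

end

theory Submission
  imports Defs
begin


abbreviation "ek \<phi> C S \<equiv> ket2 (complex_of_real C) (exp (\<i> * complex_of_real \<phi>) * complex_of_real S)"

lemma mat2_eq: "mat2 a b c d = mat2 a' b' c' d' \<longleftrightarrow> a = a' \<and> b = b' \<and> c = c' \<and> d = d'"
  by (auto simp: mat2_def vec_eq_iff forall_2)

lemma mat2_scale: "p *\<^sub>R mat2 a b c d = mat2 (of_real p * a) (of_real p * b) (of_real p * c) (of_real p * d)"
  apply (simp only: vec_eq_iff forall_2 vector_scaleR_component)
  apply (simp add: mat2_def scaleR_conv_of_real)
  done

lemma mat2_add: "mat2 a b c d + mat2 a' b' c' d' = mat2 (a + a') (b + b') (c + c') (d + d')"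
  by (auto simp: mat2_def vec_eq_iff forall_2)

lemma outer_ket2: "outer (ket2 x y) = mat2 (x * cnj x) (x * cnj y) (y * cnj x) (y * cnj y)"
  by (auto simp: mat2_def outer_def ket2_def vec_eq_iff forall_2)

lemma norm_ket2: "norm (ket2 x y) = sqrt ((cmod x)\<^sup>2 + (cmod y)\<^sup>2)"
  by (simp add: norm_vec_def L2_set_def sum_2 ket2_def)

lemma outer_ek: "outer (ek \<phi> C S) = mat2 (of_real (C\<^sup>2)) (of_real (C*S) * cnj (exp (\<i> * of_real \<phi>)))
    (of_real (C*S) * exp (\<i> * of_real \<phi>)) (of_real (S\<^sup>2))"
proof -
  have "exp (\<i> * of_real \<phi>) * cnj (exp (\<i> * of_real \<phi>)) = 1"
    by (simp add: exp_cnj flip: exp_add)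
  then show ?thesis
    by (simp add: outer_ket2 power2_eq_square mult_ac)
qed

lemma norm_ek: "C\<^sup>2 + S\<^sup>2 = 1 \<Longrightarrow> norm (ek \<phi> C S) = 1"
  by (simp add: norm_ket2 norm_mult)

lemma coh_ek: "coh (f_pow k) (ek \<phi> C S) = 1 - (2 * C\<^sup>2 - 1) ^ (2 * k)"
  by (simp add: coh_def ket2_def f_pow_def norm_mult)

lemma bloch_mat2: "bloch_state (r * cos \<phi>) (r * sin \<phi>) z =
   mat2 (of_real ((1 + z) / 2)) (of_real (r/2) * cnj (exp (\<i> * of_real \<phi>)))
        (of_real (r/2) * exp (\<i> * of_real \<phi>)) (of_real ((1 - z) / 2))"
  by (auto simp: bloch_state_def mat2_def vec_eq_iff forall_2 id2_def sigma_x_def sigma_y_def sigma_z_def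
      complex_eq_iff simp flip: cis_conv_exp)



lemma decomp_ek2:
  assumes "p \<ge> 0" "q \<ge> 0" "p + q = 1" "C1\<^sup>2 + S1\<^sup>2 = 1" "C2\<^sup>2 + S2\<^sup>2 = 1"
    and e1: "p * C1\<^sup>2 + q * C2\<^sup>2 = (1 + z) / 2"
    and e2: "p * (C1 * S1) + q * (C2 * S2) = r / 2"
    and e3: "p * S1\<^sup>2 + q * S2\<^sup>2 = (1 - z) / 2"
  shows "pure_decomp (bloch_state (r * cos \<phi>) (r * sin \<phi>) z) [(p, ek \<phi> C1 S1), (q, ek \<phi> C2 S2)]"
proof -
  define e where "e = exp (\<i> * complex_of_real \<phi>)"
  have a: "complex_of_real p * complex_of_real (C1\<^sup>2) + complex_of_real q * complex_of_real (C2\<^sup>2) = complex_of_real ((1 + z) / 2)"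
    by (simp flip: e1)
  have b: "complex_of_real p * (complex_of_real (C1 * S1) * x) + complex_of_real q * (complex_of_real (C2 * S2) * x) = complex_of_real (r / 2) * x" for x
    by (simp flip: e2 add: algebra_simps)
  have c: "complex_of_real p * complex_of_real (S1\<^sup>2) + complex_of_real q * complex_of_real (S2\<^sup>2) = complex_of_real ((1 - z) / 2)"
    by (simp flip: e3)
  show ?thesis
    unfolding pure_decomp_def using assms
    by (simp add: outer_ek bloch_mat2 mat2_scale mat2_add norm_ek mat2_eq a b c del: of_real_mult of_real_power of_real_divide of_real_add)
qed

lemma decomp_01:
  assumes "p \<ge> 0" "q \<ge> 0" "p + q = 1" "C2\<^sup>2 + S2\<^sup>2 = 1"
    and e1: "q * C2\<^sup>2 = (1 + z) / 2"
    and e2: "q * (C2 * S2) = r / 2"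
    and e3: "p + q * S2\<^sup>2 = (1 - z) / 2"
  shows "pure_decomp (bloch_state (r * cos \<phi>) (r * sin \<phi>) z) [(p, ket2 0 1), (q, ek \<phi> C2 S2)]"
proof -
  have a: "complex_of_real q * complex_of_real (C2\<^sup>2) = complex_of_real ((1 + z) / 2)"
    by (simp flip: e1)
  have b: "complex_of_real q * (complex_of_real (C2 * S2) * x) = complex_of_real (r / 2) * x" for x
    by (simp flip: e2 add: algebra_simps)
  have c: "complex_of_real p + complex_of_real q * complex_of_real (S2\<^sup>2) = complex_of_real ((1 - z) / 2)"
    by (simp flip: e3)
  have n: "norm (ket2 0 1) = 1" by (simp add: norm_ket2)
  have o: "outer (ket2 0 1) = mat2 0 0 0 1" by (simp add: outer_ket2)
  show ?thesis
    unfolding pure_decomp_def using assms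
    by (simp add: outer_ek o bloch_mat2 mat2_scale mat2_add norm_ek n mat2_eq a b c del: of_real_mult of_real_power of_real_divide of_real_add)
qed



lemma convex_simplex2: "convex simplex2"
proof (rule convexI)
  fix x y :: "real \<times> real" and u v :: real
  assume x: "x \<in> simplex2" and y: "y \<in> simplex2" and u: "0 \<le> u" and v: "0 \<le> v" and uv: "u + v = 1"
  obtain a1 a2 where xa: "x = (a1, a2)" by (cases x)
  obtain b1 b2 where yb: "y = (b1, b2)" by (cases y)
  have a: "a1 \<ge> 0" "a2 \<ge> 0" "a1 + a2 = 1" using x xa by (auto simp: simplex2_def)
  have b: "b1 \<ge> 0" "b2 \<ge> 0" "b1 + b2 = 1" using y yb by (auto simp: simplex2_def)
  have s: "(u * a1 + v * b1) + (u * a2 + v * b2) = u * (a1 + a2) + v * (b1 + b2)" by (simp add: algebra_simps)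
  have "u * a1 + v * b1 \<ge> 0" "u * a2 + v * b2 \<ge> 0" using a b u v by simp_all
  then show "u *\<^sub>R x + v *\<^sub>R y \<in> simplex2" unfolding xa yb simplex2_def
    using s a(3) b(3) uv by simp
qed

lemma fpow_Fsc: "f_pow k \<in> F_sc"
proof -
  have cv: "convex_on UNIV (\<lambda>x::real. x^(2*k))" by (rule convex_power_even) simp
  have "concave_on simplex2 (f_pow k)"
    unfolding concave_on_iff
  proof (intro conjI convex_simplex2 ballI allI impI)
    fix x y :: "real \<times> real" and u v :: real
    assume uv: "u \<ge> 0" "v \<ge> 0" "u + v = 1"
    obtain a1 a2 where xa: "x = (a1, a2)" by (cases x)
    obtain b1 b2 where yb: "y = (b1, b2)" by (cases y)
    have ineq: "(u * (2 * a1 - 1) + v * (2 * b1 - 1))^(2*k) \<le> u * (2 * a1 - 1)^(2*k) + v * (2 * b1 - 1)^(2*k)"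
      using cv[unfolded convex_on_def, THEN conjunct2, rule_format, of "2 * a1 - 1" "2 * b1 - 1" u v] uv by simp
    have eq: "u * (2 * a1 - 1) + v * (2 * b1 - 1) = 2 * (u * a1 + v * b1) - 1"
      using uv(3) by (simp add: algebra_simps)
    have l: "u * f_pow k x + v * f_pow k y = (u + v) - (u * (2 * a1 - 1)^(2*k) + v * (2 * b1 - 1)^(2*k))"
      unfolding xa yb f_pow_def by (simp add: right_diff_distrib)
    have r: "f_pow k (u *\<^sub>R x + v *\<^sub>R y) = 1 - (2 * (u * a1 + v * b1) - 1) ^ (2 * k)"
      unfolding xa yb f_pow_def by simp
    show "u * f_pow k x + v * f_pow k y \<le> f_pow k (u *\<^sub>R x + v *\<^sub>R y)"
      unfolding l r using ineq uv(3) unfolding eq by linarith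
  qed
  moreover have "f_pow k (x2, x1) = f_pow k (x1, x2)" if "(x1, x2) \<in> simplex2" for x1 x2
  proof -
    have "2 * x2 - 1 = - (2 * x1 - 1)" using that by (simp add: simplex2_def)
    then show ?thesis by (simp add: f_pow_def power_mult power2_commute)
  qed
  ultimately show ?thesis by (auto simp: F_sc_def f_pow_def)
qed

theorem mainTheorem8:
  fixes n \<theta> \<phi> :: real
  assumes "0 < n" "n < 1" "0 < \<theta>" "\<theta> \<le> pi / 2"
  defines "\<rho> \<equiv> bloch_state (n * sin \<theta> * cos \<phi>) (n * sin \<theta> * sin \<phi>) (n * cos \<theta>)"
      and "\<theta>3 \<equiv> arccos (sqrt (1 - n\<^sup>2 * (sin \<theta>)\<^sup>2))"
      and "\<theta>4 \<equiv> arccos ((1 + 2 * n * cos \<theta> + n\<^sup>2 * cos (2 * \<theta>)) / (1 + n\<^sup>2 + 2 * n * cos \<theta>))"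
  defines "D1 \<equiv>
     [((1 + n * cos \<theta> / cos \<theta>3) / 2,
        ket2 (of_real (cos (\<theta>3 / 2))) (exp (\<i> * of_real \<phi>) * of_real (sin (\<theta>3 / 2)))),
      ((1 - n * cos \<theta> / cos \<theta>3) / 2,
        ket2 (of_real (sin (\<theta>3 / 2))) (exp (\<i> * of_real \<phi>) * of_real (cos (\<theta>3 / 2))))]"
      and "D2 \<equiv>
     [((1 - n\<^sup>2) / (2 * (1 + n * cos \<theta>)), ket2 0 1),
      ((1 + n\<^sup>2 + 2 * n * cos \<theta>) / (2 * (1 + n * cos \<theta>)),
        ket2 (of_real (cos (\<theta>4 / 2))) (exp (\<i> * of_real \<phi>) * of_real (sin (\<theta>4 / 2))))]"
  shows "(\<forall>k::nat. k > 0 \<longrightarrow> f_pow k \<in> F_sc)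
         \<and> pure_decomp \<rho> D1 \<and> pure_decomp \<rho> D2
         \<and> (\<exists>K::nat. \<forall>k\<ge>K. avg_coh (f_pow k) D1 > avg_coh (f_pow k) D2)
         \<and> \<not> (\<forall>f\<in>F_sc. avg_coh f D1 \<le> avg_coh f D2)"
proof -
  define s where "s = sin \<theta>"
  define c where "c = cos \<theta>"
  have s0: "s > 0" unfolding s_def using assms(3,4) by (intro sin_gt_zero) auto
  have c0: "c \<ge> 0" unfolding c_def using assms(3,4) by (intro cos_ge_zero) auto
  have sc: "s\<^sup>2 + c\<^sup>2 = 1" unfolding s_def c_def by simp
  have s1: "s \<le> 1" unfolding s_def by simp
  have c2: "cos (2 * \<theta>) = c\<^sup>2 - s\<^sup>2" unfolding s_def c_def by (simp add: cos_double)
  have ns1: "n * s < 1"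
  proof -
    have "n * s \<le> n" using s1 assms(1) by (simp add: mult_left_le)
    then show ?thesis using assms(2) by linarith
  qed
  have n2: "n\<^sup>2 < 1" using power_strict_mono[of n 1 2] assms(1,2) by simp
  define x3 where "x3 = sqrt (1 - n\<^sup>2 * s\<^sup>2)"
  have ns2: "n\<^sup>2 * s\<^sup>2 < 1"
  proof -
    have "(n * s)\<^sup>2 < 1\<^sup>2" using ns1 s0 assms(1) by (intro power_strict_mono) auto
    then show ?thesis by (simp add: power_mult_distrib)
  qed
  have x3pos: "x3 > 0" unfolding x3_def using ns2 by simp
  have x3lt: "x3 < 1" unfolding x3_def using s0 assms(1) by (simp add: power_mult_distrib[symmetric])
  have th3: "\<theta>3 = arccos x3" by (simp add: \<theta>3_def x3_def s_def)
  have cos3: "cos \<theta>3 = x3" unfolding th3 using x3pos x3lt by (intro cos_arccos) auto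
  have sin3: "sin \<theta>3 = n * s"
  proof -
    have "sin \<theta>3 = sqrt (1 - x3\<^sup>2)" unfolding th3 using x3pos x3lt
      by (intro sin_arccos) auto
    also have "1 - x3\<^sup>2 = (n * s)\<^sup>2" unfolding x3_def using ns2 by (simp add: power_mult_distrib)
    finally show ?thesis using s0 assms(1) by simp
  qed
  define C3 where "C3 = cos (\<theta>3 / 2)"
  define S3 where "S3 = sin (\<theta>3 / 2)"
  have h3a: "C3\<^sup>2 + S3\<^sup>2 = 1" unfolding C3_def S3_def by simp
  have h3b: "C3\<^sup>2 - S3\<^sup>2 = x3" using cos_double[of "\<theta>3/2"] cos3 unfolding C3_def S3_def by simp
  have h3c: "2 * (C3 * S3) = n * s" using sin_double[of "\<theta>3/2"] sin3 unfolding C3_def S3_def by (simp add: mult_ac)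
  have ncx: "n * c \<le> x3" unfolding x3_def
  proof (rule real_le_rsqrt)
    have "c\<^sup>2 = 1 - s\<^sup>2" using sc by simp
    then show "(n * c)\<^sup>2 \<le> 1 - n\<^sup>2 * s\<^sup>2" using n2 by (simp add: power_mult_distrib right_diff_distrib)
  qed
  have dec1: "pure_decomp \<rho> D1"
  proof -
    have "pure_decomp (bloch_state ((n * s) * cos \<phi>) ((n * s) * sin \<phi>) (n * c))
       [((1 + n * c / x3) / 2, ek \<phi> C3 S3), ((1 - n * c / x3) / 2, ek \<phi> S3 C3)]"
    proof (rule decomp_ek2)
      show "0 \<le> (1 + n * c / x3) / 2" using x3pos assms(1) c0 by simp
      show "0 \<le> (1 - n * c / x3) / 2" using x3pos ncx by (simp add: divide_le_eq)
      have ax: "n * c / x3 * x3 = n * c" using x3pos by simp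
      have "(1 + n * c / x3) / 2 * C3\<^sup>2 + (1 - n * c / x3) / 2 * S3\<^sup>2 = (C3\<^sup>2 + S3\<^sup>2) / 2 + (n * c / x3) * (C3\<^sup>2 - S3\<^sup>2) / 2"
        by (simp add: algebra_simps add_divide_distrib diff_divide_distrib)
      also have "\<dots> = (1 + n * c) / 2" unfolding h3a h3b ax by simp
      finally show "(1 + n * c / x3) / 2 * C3\<^sup>2 + (1 - n * c / x3) / 2 * S3\<^sup>2 = (1 + n * c) / 2" .
      show "(1 + n * c / x3) / 2 * (C3 * S3) + (1 - n * c / x3) / 2 * (S3 * C3) = n * s / 2"
        using h3c by (simp add: field_simps)
      have "(1 + n * c / x3) / 2 * S3\<^sup>2 + (1 - n * c / x3) / 2 * C3\<^sup>2 = (C3\<^sup>2 + S3\<^sup>2) / 2 - (n * c / x3) * (C3\<^sup>2 - S3\<^sup>2) / 2"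
        by (simp add: algebra_simps add_divide_distrib diff_divide_distrib)
      also have "\<dots> = (1 - n * c) / 2" unfolding h3a h3b ax by simp
      finally show "(1 + n * c / x3) / 2 * S3\<^sup>2 + (1 - n * c / x3) / 2 * C3\<^sup>2 = (1 - n * c) / 2" .
    qed (use h3a in \<open>auto simp: add.commute add_divide_distrib[symmetric]\<close>)
    then show ?thesis unfolding \<rho>_def D1_def cos3 C3_def S3_def s_def c_def by (simp add: mult.assoc)
  qed
  define d where "d = 1 + n\<^sup>2 + 2 * n * c"
  define N where "N = 1 + 2 * n * c + n\<^sup>2 * (c\<^sup>2 - s\<^sup>2)"
  define y4 where "y4 = N / d"
  have d0: "d > 0" unfolding d_def using assms(1) c0 by (simp add: add_pos_nonneg)
  have nc0: "1 + n * c > 0" using assms(1) c0 by (simp add: add_pos_nonneg)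
  have sc': "s\<^sup>2 = 1 - c\<^sup>2" using sc by simp
  have Neq: "N = 1 + 2 * n * c + n\<^sup>2 * (2 * c\<^sup>2 - 1)" unfolding N_def sc' by simp
  have key0: "d\<^sup>2 - N\<^sup>2 = 4 * n\<^sup>2 * (1 + n * c)\<^sup>2 * (1 - c\<^sup>2)"
    unfolding Neq d_def by (simp add: power2_eq_square algebra_simps)
  have key: "d\<^sup>2 - N\<^sup>2 = (2 * n * s * (1 + n * c))\<^sup>2"
    unfolding key0 by (simp add: power_mult_distrib sc')
  have dN: "d + N = 2 * (1 + n * c)\<^sup>2"
    unfolding Neq d_def by (simp add: power2_eq_square algebra_simps)
  have Nle: "N\<^sup>2 \<le> d\<^sup>2" using key by (smt (verit) zero_le_power2)
  have y4b: "\<bar>y4\<bar> \<le> 1" unfolding y4_def using Nle d0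
    by (simp add: abs_le_square_iff[symmetric] abs_divide)
  have th4: "\<theta>4 = arccos y4" unfolding \<theta>4_def y4_def N_def d_def c2 by (simp add: c_def s_def)
  have cos4: "cos \<theta>4 = y4" unfolding th4 using y4b by (intro cos_arccos) auto
  have sin4: "sin \<theta>4 = 2 * n * s * (1 + n * c) / d"
  proof -
    have "sin \<theta>4 = sqrt (1 - y4\<^sup>2)" unfolding th4 using y4b by (intro sin_arccos) auto
    also have "1 - y4\<^sup>2 = (2 * n * s * (1 + n * c) / d)\<^sup>2"
    proof -
      have "1 - y4\<^sup>2 = (d\<^sup>2 - N\<^sup>2) / d\<^sup>2" unfolding y4_def using d0 by (simp add: power_divide field_simps)
      then show ?thesis unfolding key by (simp add: power_divide)
    qed
    finally show ?thesis using s0 assms(1) d0 nc0 by simp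
  qed
  define C4 where "C4 = cos (\<theta>4 / 2)"
  define S4 where "S4 = sin (\<theta>4 / 2)"
  have h4a: "C4\<^sup>2 + S4\<^sup>2 = 1" unfolding C4_def S4_def by simp
  have h4b: "C4\<^sup>2 - S4\<^sup>2 = y4" using cos_double[of "\<theta>4/2"] cos4 unfolding C4_def S4_def by simp
  have h4c: "2 * (C4 * S4) = 2 * n * s * (1 + n * c) / d" using sin_double[of "\<theta>4/2"] sin4 unfolding C4_def S4_def by (simp add: mult_ac)
  have C4sq: "C4\<^sup>2 = (1 + y4) / 2" using h4a h4b by simp
  have S4sq: "S4\<^sup>2 = (1 - y4) / 2" using h4a h4b by simp
  define p1 where "p1 = (1 - n\<^sup>2) / (2 * (1 + n * c))"
  define p2 where "p2 = d / (2 * (1 + n * c))"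
  have p12: "p1 + p2 = 1"
  proof -
    have e: "1 - n\<^sup>2 + d = 2 * (1 + n * c)" unfolding d_def by simp
    have "p1 + p2 = (1 - n\<^sup>2 + d) / (2 * (1 + n * c))" unfolding p1_def p2_def by (simp add: add_divide_distrib)
    then show ?thesis unfolding e using nc0 by simp
  qed
  have dec2: "pure_decomp \<rho> D2"
  proof -
    have "pure_decomp (bloch_state ((n * s) * cos \<phi>) ((n * s) * sin \<phi>) (n * c))
       [(p1, ket2 0 1), (p2, ek \<phi> C4 S4)]"
    proof (rule decomp_01)
      show "0 \<le> p1" unfolding p1_def using nc0 assms(1,2) by (simp add: power_le_one)
      show "0 \<le> p2" unfolding p2_def using nc0 d0 by simp
      have q1: "(1 + N / d) / 2 = (d + N) / (2 * d)" using d0 by (simp add: field_simps)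
      have "p2 * C4\<^sup>2 = d / (2 * (1 + n * c)) * ((d + N) / (2 * d))" unfolding C4sq p2_def y4_def q1 by simp
      also have "\<dots> = (d + N) / (4 * (1 + n * c))" using d0 by simp
      also have "\<dots> = (1 + n * c) / 2"
      proof -
        have g: "\<And>t::real. t > 0 \<Longrightarrow> 2 * t\<^sup>2 / (4 * t) = t / 2" by (simp add: power2_eq_square)
        show ?thesis unfolding dN using g[OF nc0] .
      qed
      finally show e1: "p2 * C4\<^sup>2 = (1 + n * c) / 2" .
      show "p2 * (C4 * S4) = n * s / 2"
        using h4c unfolding p2_def using d0 nc0 by (simp add: field_simps)
      have "p1 + p2 * S4\<^sup>2 = (p1 + p2) - p2 * C4\<^sup>2" proof -
        have "p2 * C4\<^sup>2 + p2 * S4\<^sup>2 = p2" using h4a by (metis distrib_left mult.right_neutral)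
        then show ?thesis by simp
      qed
      then show "p1 + p2 * S4\<^sup>2 = (1 - n * c) / 2"
        unfolding p12 e1 by (simp add: field_simps)
    qed (use h4a p12 in auto)
    then show ?thesis unfolding \<rho>_def D2_def C4_def S4_def p1_def p2_def d_def s_def c_def by (simp add: mult.assoc)
  qed
  have hC: "2 * C3\<^sup>2 - 1 = x3" using h3a h3b by simp
  have hS: "2 * S3\<^sup>2 - 1 = - x3" using h3a h3b by simp
  have hC4: "2 * C4\<^sup>2 - 1 = y4" using h4a h4b by simp
  have avg1: "avg_coh (f_pow k) D1 = 1 - x3 ^ (2 * k)" for k
  proof -
    have m: "(- x3) ^ (2 * k) = x3 ^ (2 * k)" by (simp add: power_mult)
    have "avg_coh (f_pow k) D1 = (1 + n * c / x3) / 2 * (1 - x3 ^ (2 * k)) + (1 - n * c / x3) / 2 * (1 - x3 ^ (2 * k))"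
      unfolding avg_coh_def D1_def C3_def[symmetric] S3_def[symmetric] cos3 c_def[symmetric]
      by (simp add: coh_ek hC hS m)
    also have "\<dots> = ((1 + n * c / x3) / 2 + (1 - n * c / x3) / 2) * (1 - x3 ^ (2 * k))"
      by (simp add: distrib_right)
    also have "(1 + n * c / x3) / 2 + (1 - n * c / x3) / 2 = 1" by (simp add: add_divide_distrib[symmetric])
    finally show ?thesis by simp
  qed
  have coh01: "coh (f_pow k) (ket2 0 1) = 0" for k by (simp add: coh_def ket2_def f_pow_def)
  have avg2: "avg_coh (f_pow k) D2 = p2 * (1 - y4 ^ (2 * k))" for k
    unfolding avg_coh_def D2_def C4_def[symmetric] S4_def[symmetric] c_def[symmetric] d_def[symmetric]
       p2_def[symmetric] by (simp add: coh_ek hC4 coh01)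
  have p2lt: "p2 < 1" unfolding p2_def d_def using nc0 n2 by (simp add: divide_less_eq)
  have p2pos: "p2 > 0" unfolding p2_def using nc0 d0 by simp
  obtain K0 where K0: "x3 ^ K0 < 1 - p2" using real_arch_pow_inv[of "1 - p2" x3] p2lt x3lt by auto
  have ev: "avg_coh (f_pow k) D1 > avg_coh (f_pow k) D2" if "k \<ge> K0" for k
  proof -
    have "x3 ^ (2 * k) \<le> x3 ^ K0" using that x3pos x3lt by (intro power_decreasing) auto
    moreover have "y4 ^ (2 * k) \<ge> 0" by (simp add: power_mult)
    moreover have "p2 * y4 ^ (2 * k) \<ge> 0" using p2pos calculation(2) by simp
    moreover have "p2 * (1 - y4 ^ (2 * k)) = p2 - p2 * y4 ^ (2 * k)" by (simp add: right_diff_distrib)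
    ultimately show ?thesis unfolding avg1 avg2 using K0 by linarith
  qed
  have all: "\<forall>k::nat. k > 0 \<longrightarrow> f_pow k \<in> F_sc" using fpow_Fsc by blast
  show ?thesis
  proof (intro conjI all dec1 dec2)
    show "\<exists>K. \<forall>k\<ge>K. avg_coh (f_pow k) D2 < avg_coh (f_pow k) D1" using ev by blast
    show "\<not> (\<forall>f\<in>F_sc. avg_coh f D1 \<le> avg_coh f D2)"
    proof
      assume h: "\<forall>f\<in>F_sc. avg_coh f D1 \<le> avg_coh f D2"
      have "avg_coh (f_pow K0) D1 \<le> avg_coh (f_pow K0) D2" using h fpow_Fsc[of K0] by blast
      with ev[of K0] show False by simp
    qed
  qed
qed

end
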